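(* Let $m,n\ge 1$ be integers, let $X=[x_1,\dots,x_n]^T$ be a random vector in $\mathbb{R}^n$, and let $S=(S_{i,j})$ be an $m\times n$ random matrix; set $A=\frac{1}{\sqrt{m}}S$ and $C=\frac{m}{n}$. Suppose that all the random variables $x_i$ ($1\le i\le n$) and $S_{i,j}$ ($1\le i\le m$, $1\le j\le n$) are independent and identically distributed, with mean zero and variance one, and that they are sub-Gaussian with parameter $v=1$, i.e. $\mathbb{E}e^{\lambda Y}\le e^{\lambda^2/2}$ for all $\lambda\in\mathbb{R}$, where $Y$ denotes any of these variables. Then for all $t>0$: \begin{enumerate} \item $\displaystyle \mathbb{P}\left( \frac{1}{\sqrt{n}} \left| \|X\|^2 -n \right|> t \right) < 2\exp\left\{ - \min\left(\frac{t^2}{160}, \frac{t\sqrt{n}}{10}\right) \right\};$ \item $\displaystyle \mathbb{P}\left( \frac{1}{\sqrt{n}} \left| \|AX\|^2 - \|X\|^2 \right|> \frac{\|X\|^2}{n}\, t \right) < 2 \exp \left\{ -\min \left( \frac{t^2 C}{160} , \frac{t C \sqrt{n}}{10} \right) \right\}.$ \end{enumerate}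
   Context: $\|\cdot\|$ denotes the Euclidean norm. A real random variable $Y$ is called sub-Gaussian with parameter $v>0$ if $\mathbb{E}e^{\lambda Y}\le e^{\lambda^2 v/2}$ for all $\lambda\in\mathbb{R}$. *)

theory Defs
  imports "HOL-Probability.Probability"
begin

definition subgaussian :: "'a measure \<Rightarrow> real \<Rightarrow> ('a \<Rightarrow> real) \<Rightarrow> bool" where
  "subgaussian M v Y \<longleftrightarrow>
     (\<forall>l::real. integrable M (\<lambda>\<omega>. exp (l * Y \<omega>)) \<and>
        (\<integral>\<omega>. exp (l * Y \<omega>) \<partial>M) \<le> exp (l\<^sup>2 * v / 2))"

text \<open>All entries of X (indices Inl i, i<n) and of S (indices Inr (i,j), i<m, j<n) as one family.\<close>
definition entries :: "(nat \<Rightarrow> 'a \<Rightarrow> real) \<Rightarrow> (nat \<Rightarrow> nat \<Rightarrow> 'a \<Rightarrow> real)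
    \<Rightarrow> nat + nat \<times> nat \<Rightarrow> 'a \<Rightarrow> real" where
  "entries x S k = (case k of Inl i \<Rightarrow> x i | Inr (i, j) \<Rightarrow> S i j)"

definition entry_index :: "nat \<Rightarrow> nat \<Rightarrow> (nat + nat \<times> nat) set" where
  "entry_index m n = Inl ` {..<n} \<union> Inr ` ({..<m} \<times> {..<n})"

definition sqnorm_X :: "nat \<Rightarrow> (nat \<Rightarrow> 'a \<Rightarrow> real) \<Rightarrow> 'a \<Rightarrow> real" where
  "sqnorm_X n x \<omega> = (\<Sum>i<n. (x i \<omega>)\<^sup>2)"

definition sqnorm_AX :: "nat \<Rightarrow> nat \<Rightarrow> (nat \<Rightarrow> nat \<Rightarrow> 'a \<Rightarrow> real) \<Rightarrow> (nat \<Rightarrow> 'a \<Rightarrow> real) \<Rightarrow> 'a \<Rightarrow> real" where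
  "sqnorm_AX m n S x \<omega> = (\<Sum>i<m. ((\<Sum>j<n. (1 / sqrt (real m)) * S i j \<omega> * x j \<omega>))\<^sup>2)"

end

theory Submission
  imports Defs
begin

lemma exp_ge_pow:
  fixes y :: real assumes "0 \<le> y" shows "y ^ k / fact k \<le> exp y"
proof -
  have s: "summable (\<lambda>n. y ^ n /\<^sub>R fact n)" using exp_converges sums_summable by blast
  have "sum (\<lambda>n. y ^ n /\<^sub>R fact n) {k} \<le> suminf (\<lambda>n. y ^ n /\<^sub>R fact n)"
    by (rule sum_le_suminf[OF s]) (use assms in auto)
  also have "\<dots> = exp y" using exp_converges sums_unique by metis
  finally show ?thesis by (simp add: divide_inverse mult.commute)
qed

lemma even_pow_le_cosh:
  fixes y :: real shows "y ^ (2*k) / fact (2*k) \<le> exp y + exp (- y)"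
proof (cases "0 \<le> y")
  case True
  then show ?thesis using exp_ge_pow[OF True, of "2*k"] exp_gt_zero[of "-y"] by linarith
next
  case False
  then have "(-y) ^ (2*k) / fact (2*k) \<le> exp (-y)" using exp_ge_pow[of "-y" "2*k"] by simp
  moreover have "(-y) ^ (2*k) = y ^ (2*k)" by (simp add: power_mult)
  ultimately have "y ^ (2*k) / fact (2*k) \<le> exp (-y)" by simp
  then show ?thesis using exp_gt_zero[of "y"] by linarith
qed


lemma exp_quad_neg:
  fixes z :: real assumes "z \<le> 0" shows "exp z \<le> 1 + z + z\<^sup>2 / 2"
proof -
  define f where "f w = 1 + w + w\<^sup>2 / 2 - exp w" for w :: real
  have d: "DERIV f w :> 1 + w - exp w" for w
  proof -
    have "DERIV (\<lambda>w. 1 + w + w * w / 2 - exp w) w :> 0 + 1 + (1 * w + 1 * w) / 2 - exp w"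
      by (intro DERIV_diff DERIV_add DERIV_const DERIV_ident DERIV_cdivide DERIV_mult DERIV_exp)
    moreover have "(\<lambda>w. 1 + w + w * w / 2 - exp w) = f" unfolding f_def by (simp add: power2_eq_square)
    ultimately show ?thesis by simp
  qed
  have "f 0 \<le> f z"
  proof (rule DERIV_nonpos_imp_nonincreasing[OF assms])
    fix w :: real assume "z \<le> w" "w \<le> 0"
    show "\<exists>y. DERIV f w :> y \<and> y \<le> 0"
      using d[of w] exp_ge_add_one_self[of w] by (intro exI[of _ "1 + w - exp w"]) auto
  qed
  moreover have "f 0 = 0" by (simp add: f_def)
  ultimately show ?thesis unfolding f_def by linarith
qed
lemma pow_two_bound:
  assumes "k \<noteq> 0" shows "2 * (2 * real k) ^ k \<le> (2 * real k + 2) ^ k"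
proof -
  have "(real k + 1) ^ k = (\<Sum>i\<le>k. of_nat (k choose i) * 1 ^ i * real k ^ (k - i))"
    using binomial_ring[of 1 "real k" k] by (simp add: add.commute)
  also have "\<dots> \<ge> (\<Sum>i\<in>{0,1}. of_nat (k choose i) * 1 ^ i * real k ^ (k - i))"
    by (rule sum_mono2) (use assms in auto)
  finally have "(real k + 1) ^ k \<ge> real k ^ k + real k * real k ^ (k - 1)" by simp
  moreover have "real k * real k ^ (k - 1) = real k ^ k"
    using assms by (cases k) auto
  ultimately have "(real k + 1) ^ k \<ge> 2 * real k ^ k" by simp
  then have "2 ^ k * (2 * real k ^ k) \<le> 2 ^ k * (real k + 1) ^ k" by simp
  moreover have "(2 * real k + 2) ^ k = 2 ^ k * (real k + 1) ^ k"
  proof -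
    have "(2 * real k + 2) = 2 * (real k + 1)" by simp
    then show ?thesis by (simp only: power_mult_distrib)
  qed
  moreover have "2 * (2 * real k) ^ k = 2 ^ k * (2 * real k ^ k)"
    by (simp add: power_mult_distrib)
  ultimately show ?thesis by simp
qed

lemma fact_double_le: "fact (2*k) \<le> (fact k :: real) * (2 * real k) ^ k"
proof (induction k)
  case 0 then show ?case by simp
next
  case (Suc k)
  show ?case
  proof (cases "k = 0")
    case True then show ?thesis by (simp add: fact_numeral)
  next
    case False
    have b: "2 * (2 * real k) ^ k \<le> (2 * real k + 2) ^ k" using pow_two_bound[OF False] .
    have e: "2 * Suc k = Suc (Suc (2 * k))" by simp
    have "fact (2 * Suc k) = (2 * real k + 2) * ((2 * real k + 1) * (fact (2*k) :: real))"
      unfolding e fact_Suc by (simp add: algebra_simps)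
    also have "\<dots> \<le> (2 * real k + 2) * ((2 * real k + 1) * (fact k * (2 * real k) ^ k))"
      by (intro mult_left_mono Suc.IH) auto
    also have "\<dots> = (real k + 1) * fact k * ((2 * real k + 1) * (2 * (2 * real k) ^ k))"
      by (simp add: algebra_simps)
    also have "\<dots> \<le> (real k + 1) * fact k * ((2 * real k + 2) * (2 * real k + 2) ^ k)"
    proof -
      have "(2 * real k + 1) * (2 * (2 * real k) ^ k) \<le> (2 * real k + 2) * (2 * real k + 2) ^ k"
        by (rule mult_mono) (use b in auto)
      moreover have "0 \<le> (real k + 1) * fact k" by simp
      ultimately show ?thesis by (rule mult_left_mono)
    qed
    also have "\<dots> = fact (Suc k) * (2 * real (Suc k)) ^ Suc k"
    proof -
      have "fact (Suc k) = (real k + 1) * fact k" by (simp add: fact_Suc)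
      moreover have "(2 * real (Suc k)) ^ Suc k = (2 * real k + 2) * (2 * real k + 2) ^ k" by (simp add: add.commute)
      ultimately show ?thesis by (simp only: mult.assoc)
    qed
    finally show ?thesis .
  qed
qed

context prob_space begin

lemma subg_int: "subgaussian M v W \<Longrightarrow> integrable M (\<lambda>\<omega>. exp (l * W \<omega>))"
  unfolding subgaussian_def by blast

lemma subg_le: "subgaussian M v W \<Longrightarrow> expectation (\<lambda>\<omega>. exp (l * W \<omega>)) \<le> exp (l\<^sup>2 * v / 2)"
  unfolding subgaussian_def by blast

lemma subg_moment:
  assumes W[measurable]: "W \<in> borel_measurable M" and sg: "subgaussian M 1 W" and k: "k \<ge> 1"
  shows "integrable M (\<lambda>\<omega>. W \<omega> ^ (2*k))"
    and "expectation (\<lambda>\<omega>. W \<omega> ^ (2*k)) \<le> 2 * exp 1 ^ k * (fact (2*k) / (2 * real k) ^ k)"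
proof -
  define l where "l = sqrt (2 * real k)"
  have l0: "l > 0" using k by (simp add: l_def)
  have l2: "l\<^sup>2 = 2 * real k" by (simp add: l_def)
  have lp: "l ^ (2*k) = (2 * real k) ^ k" by (simp add: power_mult l2)
  have kp: "(2 * real k) ^ k > 0" using k by simp
  define C where "C = fact (2*k) / (2 * real k) ^ k"
  have C0: "C \<ge> 0" by (simp add: C_def)
  have pw: "W \<omega> ^ (2*k) \<le> C * (exp (l * W \<omega>) + exp ((-l) * W \<omega>))" for \<omega>
  proof -
    have "(l * W \<omega>) ^ (2*k) / fact (2*k) \<le> exp (l * W \<omega>) + exp (- (l * W \<omega>))" by (rule even_pow_le_cosh)
    then have "(2 * real k) ^ k * W \<omega> ^ (2*k) \<le> fact (2*k) * (exp (l * W \<omega>) + exp (- (l * W \<omega>)))"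
    proof -
      have "(l * W \<omega>) ^ (2*k) = (2 * real k) ^ k * W \<omega> ^ (2*k)" by (simp only: power_mult_distrib lp)
      moreover have "fact (2*k) > (0::real)" by simp
      ultimately show ?thesis using \<open>(l * W \<omega>) ^ (2*k) / fact (2*k) \<le> _\<close> by (simp add: divide_le_eq mult.commute)
    qed
    then have "W \<omega> ^ (2*k) \<le> fact (2*k) * (exp (l * W \<omega>) + exp (- (l * W \<omega>))) / (2 * real k) ^ k"
      using kp by (simp add: pos_le_divide_eq mult.commute)
    then show ?thesis by (simp add: C_def)
  qed
  have int_r: "integrable M (\<lambda>\<omega>. C * (exp (l * W \<omega>) + exp ((-l) * W \<omega>)))"
    using subg_int[OF sg, of l] subg_int[OF sg, of "-l"] by auto
  have ev: "0 \<le> W \<omega> ^ (2*k)" for \<omega> by (simp add: power_mult)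
  show int: "integrable M (\<lambda>\<omega>. W \<omega> ^ (2*k))"
  proof (rule Bochner_Integration.integrable_bound[OF int_r])
    show "AE x in M. norm (W x ^ (2 * k)) \<le> norm (C * (exp (l * W x) + exp (- l * W x)))"
      using pw ev C0 by (auto intro!: AE_I2 simp del: power_mult_distrib)
  qed simp
  have "expectation (\<lambda>\<omega>. W \<omega> ^ (2*k)) \<le> expectation (\<lambda>\<omega>. C * (exp (l * W \<omega>) + exp ((-l) * W \<omega>)))"
    by (rule integral_mono[OF int int_r]) (use pw in simp)
  also have "\<dots> = C * (expectation (\<lambda>\<omega>. exp (l * W \<omega>)) + expectation (\<lambda>\<omega>. exp ((-l) * W \<omega>)))"
    using subg_int[OF sg, of l] subg_int[OF sg, of "-l"] by simp
  also have "\<dots> \<le> C * (exp (l\<^sup>2 * 1 / 2) + exp ((-l)\<^sup>2 * 1 / 2))"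
    using subg_le[OF sg, of l] subg_le[OF sg, of "-l"] C0 by (intro mult_left_mono add_mono) auto
  also have "\<dots> = 2 * exp 1 ^ k * C"
  proof -
    have "exp (l\<^sup>2 * 1 / 2) = exp 1 ^ k" using l2 exp_of_nat_mult[of k 1] by simp
    then show ?thesis by simp
  qed
  finally show "expectation (\<lambda>\<omega>. W \<omega> ^ (2*k)) \<le> 2 * exp 1 ^ k * (fact (2*k) / (2 * real k) ^ k)"
    by (simp add: C_def)
qed

lemma e_sq_bound: "exp 1 ^ 2 \<le> (7.3984::real)"
proof -
  have "exp 1 ^ 2 \<le> (272/100::real) ^ 2" by (rule power_mono[OF less_imp_le[OF e_less_272]]) simp
  moreover have "(272/100::real) ^ 2 = 7.3984" by (simp add: power2_eq_square)
  ultimately show ?thesis by linarith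
qed

lemma subg_sq_pos:
  assumes W[measurable]: "W \<in> borel_measurable M" and sg: "subgaussian M 1 W"
    and W2: "expectation (\<lambda>\<omega>. (W \<omega>)\<^sup>2) = 1"
    and th: "0 \<le> \<theta>" "\<theta> \<le> 1/5"
  shows "(\<integral>\<^sup>+\<omega>. ennreal (exp (\<theta> * (W \<omega>)\<^sup>2)) \<partial>M) \<le> ennreal (exp (\<theta> + 35 * \<theta>\<^sup>2))"
proof -
  define b where "b k = \<theta>^k / fact k * expectation (\<lambda>\<omega>. W \<omega> ^ (2*k))" for k
  have intk: "integrable M (\<lambda>\<omega>. W \<omega> ^ (2*k))" for k
    by (cases "k = 0") (auto intro: subg_moment(1)[OF W sg])
  have ev: "0 \<le> W \<omega> ^ (2*k)" for \<omega> k by (simp add: power_mult)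
  have tnn: "0 \<le> \<theta>^k / fact k * W \<omega> ^ (2*k)" for \<omega> k using th ev by simp
  have pt: "ennreal (exp (\<theta> * (W \<omega>)\<^sup>2)) = (\<Sum>k. ennreal (\<theta>^k / fact k * W \<omega> ^ (2*k)))" for \<omega>
  proof -
    have "(\<lambda>k. (\<theta> * (W \<omega>)\<^sup>2)^k /\<^sub>R fact k) sums exp (\<theta> * (W \<omega>)\<^sup>2)" by (rule exp_converges)
    moreover have "(\<lambda>k. (\<theta> * (W \<omega>)\<^sup>2)^k /\<^sub>R fact k) = (\<lambda>k. \<theta>^k / fact k * W \<omega> ^ (2*k))"
    proof
      fix k
      have "W \<omega> ^ (2*k) = ((W \<omega>)\<^sup>2)^k" by (rule power_mult)
      then show "(\<theta> * (W \<omega>)\<^sup>2)^k /\<^sub>R fact k = \<theta>^k / fact k * W \<omega> ^ (2*k)"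
        by (simp only: power_mult_distrib) (simp add: divide_inverse)
    qed
    ultimately have s: "(\<lambda>k. \<theta>^k / fact k * W \<omega> ^ (2*k)) sums exp (\<theta> * (W \<omega>)\<^sup>2)" by simp
    have "(\<Sum>k. ennreal (\<theta>^k / fact k * W \<omega> ^ (2*k))) = ennreal (\<Sum>k. \<theta>^k / fact k * W \<omega> ^ (2*k))"
      by (rule suminf_ennreal2) (use tnn s sums_summable in auto)
    also have "\<dots> = ennreal (exp (\<theta> * (W \<omega>)\<^sup>2))" using s sums_unique by metis
    finally show ?thesis by simp
  qed
  have bnn: "0 \<le> b k" for k unfolding b_def using th ev by (auto intro!: integral_nonneg)
  have b0: "b 0 = 1" by (simp add: b_def prob_space)
  have b1: "b 1 = \<theta>" using W2 by (simp add: b_def)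
  have bk: "b k \<le> 2 * (exp 1 * \<theta>) ^ k" if "k \<ge> 1" for k
  proof -
    have "b k \<le> \<theta>^k / fact k * (2 * exp 1 ^ k * (fact (2*k) / (2 * real k) ^ k))"
      unfolding b_def using th by (intro mult_left_mono subg_moment(2)[OF W sg that]) auto
    also have "\<dots> \<le> \<theta>^k / fact k * (2 * exp 1 ^ k * fact k)"
    proof -
      have "fact (2*k) / (2 * real k) ^ k \<le> (fact k :: real)"
        using fact_double_le[of k] that by (simp add: divide_le_eq mult.commute)
      then show ?thesis using th by (intro mult_left_mono) auto
    qed
    also have "\<dots> = 2 * (exp 1 * \<theta>) ^ k" by (simp add: power_mult_distrib)
    finally show ?thesis .
  qed
  define x where "x = exp 1 * \<theta>"
  have x0: "0 \<le> x" using th by (simp add: x_def)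
  have x1: "x \<le> 0.544"
  proof -
    have "x \<le> 272/100 * (1/5)" unfolding x_def using th e_less_272 by (intro mult_mono) auto
    then show ?thesis by simp
  qed
  have sg2: "summable (\<lambda>k. 2 * x^2 * x ^ k)" using x0 x1 by (intro summable_mult summable_geometric) auto
  have bsh: "b (k + 2) \<le> 2 * x^2 * x ^ k" for k
  proof -
    have "b (k+2) \<le> 2 * x ^ (k+2)" unfolding x_def by (rule bk) simp
    also have "2 * x ^ (k+2) = 2 * x^2 * x ^ k" by (simp only: power_add mult.commute mult.left_commute mult.assoc)
    finally show ?thesis .
  qed
  have sb2: "summable (\<lambda>k. b (k + 2))"
    by (rule summable_comparison_test[OF _ sg2]) (use bsh bnn in auto)
  have sb: "summable b" using sb2 summable_iff_shift[of b 2] by simp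
  have "suminf b = (\<Sum>k. b (k + 2)) + (\<Sum>i<2. b i)" by (rule suminf_split_initial_segment[OF sb])
  also have "(\<Sum>i<2. b i) = 1 + \<theta>" using b0 b1 by (simp add: numeral_2_eq_2)
  also have "(\<Sum>k. b (k + 2)) \<le> (\<Sum>k. 2 * x^2 * x ^ k)" by (rule suminf_le[OF bsh sb2 sg2])
  also have "(\<Sum>k. 2 * x^2 * x ^ k) = 2 * x^2 / (1 - x)"
    using x0 x1 by (simp add: suminf_mult suminf_geometric summable_geometric)
  finally have sbb: "suminf b \<le> 2 * x^2 / (1 - x) + (1 + \<theta>)" by simp
  have "2 * x^2 / (1 - x) \<le> 35 * \<theta>\<^sup>2"
  proof -
    have "2 * x^2 = 2 * exp 1 ^ 2 * \<theta>^2" by (simp add: x_def power_mult_distrib)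
    also have "\<dots> \<le> 2 * 7.3984 * \<theta>^2" using e_sq_bound by (intro mult_right_mono) auto
    also have "\<dots> \<le> 35 * \<theta>\<^sup>2 * (1 - x)"
    proof -
      have "35 * \<theta>\<^sup>2 * 0.456 \<le> 35 * \<theta>\<^sup>2 * (1 - x)" using x1 by (intro mult_left_mono) auto
      moreover have "2 * 7.3984 * \<theta>^2 \<le> 35 * \<theta>\<^sup>2 * 0.456" by simp
      ultimately show ?thesis by linarith
    qed
    finally show ?thesis using x1 by (simp add: divide_le_eq)
  qed
  with sbb have sbf: "suminf b \<le> 1 + (\<theta> + 35 * \<theta>\<^sup>2)" by simp
  have "(\<integral>\<^sup>+\<omega>. ennreal (exp (\<theta> * (W \<omega>)\<^sup>2)) \<partial>M) = (\<integral>\<^sup>+\<omega>. (\<Sum>k. ennreal (\<theta>^k / fact k * W \<omega> ^ (2*k))) \<partial>M)"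
    by (simp only: pt)
  also have "\<dots> = (\<Sum>k. \<integral>\<^sup>+\<omega>. ennreal (\<theta>^k / fact k * W \<omega> ^ (2*k)) \<partial>M)"
    by (rule nn_integral_suminf) measurable
  also have "\<dots> = (\<Sum>k. ennreal (b k))"
  proof -
    have "(\<integral>\<^sup>+\<omega>. ennreal (\<theta>^k / fact k * W \<omega> ^ (2*k)) \<partial>M) = ennreal (b k)" for k
      unfolding b_def using intk[of k] tnn
      by (subst nn_integral_eq_integral) auto
    then show ?thesis by simp
  qed
  also have "\<dots> = ennreal (suminf b)" by (rule suminf_ennreal2[OF bnn sb])
  also have "\<dots> \<le> ennreal (exp (\<theta> + 35 * \<theta>\<^sup>2))"
    using sbf exp_ge_add_one_self[of "\<theta> + 35 * \<theta>\<^sup>2"] by (intro ennreal_leI) linarith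
  finally show ?thesis .
qed

lemma subg_sq_neg:
  assumes W[measurable]: "W \<in> borel_measurable M" and sg: "subgaussian M 1 W"
    and W2: "integrable M (\<lambda>\<omega>. (W \<omega>)\<^sup>2)" "expectation (\<lambda>\<omega>. (W \<omega>)\<^sup>2) = 1"
    and th: "\<theta> \<le> 0" "-1/5 \<le> \<theta>"
  shows "(\<integral>\<^sup>+\<omega>. ennreal (exp (\<theta> * (W \<omega>)\<^sup>2)) \<partial>M) \<le> ennreal (exp (\<theta> + 35 * \<theta>\<^sup>2))"
proof -
  have i4: "integrable M (\<lambda>\<omega>. W \<omega> ^ (2*2))" by (rule subg_moment(1)[OF W sg]) simp
  have e4: "expectation (\<lambda>\<omega>. W \<omega> ^ (2*2)) \<le> 2 * exp 1 ^ 2 * (fact (2*2) / (2 * real 2) ^ 2)"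
    by (rule subg_moment(2)[OF W sg]) simp
  have "fact (2*2) / (2 * real 2) ^ 2 = (3/2::real)" by (simp add: fact_numeral)
  with e4 e_sq_bound have e4': "expectation (\<lambda>\<omega>. W \<omega> ^ (2*2)) \<le> 23" by simp
  define g where "g \<omega> = 1 + \<theta> * (W \<omega>)\<^sup>2 + \<theta>\<^sup>2 / 2 * W \<omega> ^ (2*2)" for \<omega>
  have pw: "exp (\<theta> * (W \<omega>)\<^sup>2) \<le> g \<omega>" for \<omega>
  proof -
    have "\<theta> * (W \<omega>)\<^sup>2 \<le> 0" using th by (simp add: mult_nonpos_nonneg)
    then have "exp (\<theta> * (W \<omega>)\<^sup>2) \<le> 1 + \<theta> * (W \<omega>)\<^sup>2 + (\<theta> * (W \<omega>)\<^sup>2)\<^sup>2 / 2" by (rule exp_quad_neg)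
    moreover have "(\<theta> * (W \<omega>)\<^sup>2)\<^sup>2 / 2 = \<theta>\<^sup>2 / 2 * W \<omega> ^ (2*2)"
      by (simp add: power_mult_distrib power_mult[symmetric])
    ultimately show ?thesis by (simp add: g_def)
  qed
  have gi: "integrable M g" unfolding g_def using W2 i4 by auto
  have "(\<integral>\<^sup>+\<omega>. ennreal (exp (\<theta> * (W \<omega>)\<^sup>2)) \<partial>M) \<le> (\<integral>\<^sup>+\<omega>. ennreal (g \<omega>) \<partial>M)"
    by (intro nn_integral_mono ennreal_leI pw)
  also have "\<dots> = ennreal (expectation g)"
    by (rule nn_integral_eq_integral[OF gi]) (use pw exp_gt_zero less_le_trans less_imp_le in blast)
  also have "expectation g = 1 + \<theta> * 1 + \<theta>\<^sup>2 / 2 * expectation (\<lambda>\<omega>. W \<omega> ^ (2*2))"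
    unfolding g_def using W2 i4 by (simp add: prob_space)
  also have "ennreal \<dots> \<le> ennreal (exp (\<theta> + 35 * \<theta>\<^sup>2))"
  proof (rule ennreal_leI)
    have "\<theta>\<^sup>2 / 2 * expectation (\<lambda>\<omega>. W \<omega> ^ (2*2)) \<le> \<theta>\<^sup>2 / 2 * 23"
      using e4' by (intro mult_left_mono) auto
    moreover have "0 \<le> \<theta>\<^sup>2" by simp
    ultimately have "1 + \<theta> * 1 + \<theta>\<^sup>2 / 2 * expectation (\<lambda>\<omega>. W \<omega> ^ (2*2)) \<le> 1 + (\<theta> + 35 * \<theta>\<^sup>2)"
      by linarith
    also have "\<dots> \<le> exp (\<theta> + 35 * \<theta>\<^sup>2)" by (rule exp_ge_add_one_self)
    finally show "1 + \<theta> * 1 + \<theta>\<^sup>2 / 2 * expectation (\<lambda>\<omega>. W \<omega> ^ (2*2)) \<le> exp (\<theta> + 35 * \<theta>\<^sup>2)" .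
  qed
  finally show ?thesis .
qed

lemma subg_sq:
  assumes W[measurable]: "W \<in> borel_measurable M" and sg: "subgaussian M 1 W"
    and W2: "integrable M (\<lambda>\<omega>. (W \<omega>)\<^sup>2)" "expectation (\<lambda>\<omega>. (W \<omega>)\<^sup>2) = 1"
    and th: "\<bar>\<theta>\<bar> \<le> 1/5"
  shows "(\<integral>\<^sup>+\<omega>. ennreal (exp (\<theta> * (W \<omega>)\<^sup>2)) \<partial>M) \<le> ennreal (exp (\<theta> + 35 * \<theta>\<^sup>2))"
proof (cases "\<theta> \<ge> 0")
  case True then show ?thesis using subg_sq_pos[OF W sg W2(2)] th by auto
next
  case False then show ?thesis using subg_sq_neg[OF W sg W2] th by auto
qed

end

context prob_space begin

lemma indep_vars_reindex:
  assumes ind: "indep_vars (\<lambda>_. borel) X (h ` J)" and inj: "inj_on h J"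
  shows "indep_vars (\<lambda>_. borel) (\<lambda>j. X (h j)) J"
proof -
  have "indep_vars (\<lambda>j. PiM {h j} (\<lambda>_. borel)) (\<lambda>j \<omega>. restrict (\<lambda>i. X i \<omega>) {h j}) J"
    by (rule indep_vars_restrict[OF ind]) (use inj in \<open>auto simp: disjoint_family_on_def inj_on_def\<close>)
  then have "indep_vars (\<lambda>_. borel) (\<lambda>j \<omega>. (\<lambda>f. f (h j)) (restrict (\<lambda>i. X i \<omega>) {h j})) J"
    by (rule indep_vars_compose2) (rule measurable_component_singleton, simp)
  then show ?thesis by simp
qed

lemma subg_lincomb:
  fixes Y :: "'i \<Rightarrow> 'a \<Rightarrow> real"
  assumes fin: "finite J" and ind: "indep_vars (\<lambda>_. borel) Y J"
    and sg: "\<And>j. j \<in> J \<Longrightarrow> subgaussian M 1 (Y j)"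
  shows "subgaussian M (\<Sum>j\<in>J. (c j)\<^sup>2) (\<lambda>\<omega>. \<Sum>j\<in>J. c j * Y j \<omega>)"
  unfolding subgaussian_def
proof
  fix l :: real
  have rv: "j \<in> J \<Longrightarrow> Y j \<in> borel_measurable M" for j using ind by (auto simp: indep_vars_def)
  have e: "exp (l * (\<Sum>j\<in>J. c j * Y j \<omega>)) = (\<Prod>j\<in>J. exp ((l * c j) * Y j \<omega>))" for \<omega>
    by (simp add: exp_sum[OF fin, symmetric] sum_distrib_left mult.assoc)
  have ind2: "indep_vars (\<lambda>_. borel) (\<lambda>j \<omega>. exp ((l * c j) * Y j \<omega>)) J"
    using indep_vars_compose2[OF ind, of "\<lambda>j y. exp ((l * c j) * y)" "\<lambda>_. borel"] by simp
  have ints: "j \<in> J \<Longrightarrow> integrable M (\<lambda>\<omega>. exp ((l * c j) * Y j \<omega>))" for j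
    using sg subg_int by blast
  have "integrable M (\<lambda>\<omega>. \<Prod>j\<in>J. exp ((l * c j) * Y j \<omega>))"
    by (rule indep_vars_integrable[OF fin ind2 ints])
  then have int: "integrable M (\<lambda>\<omega>. exp (l * (\<Sum>j\<in>J. c j * Y j \<omega>)))" by (simp only: e)
  have "expectation (\<lambda>\<omega>. exp (l * (\<Sum>j\<in>J. c j * Y j \<omega>))) = expectation (\<lambda>\<omega>. \<Prod>j\<in>J. exp ((l * c j) * Y j \<omega>))"
    by (simp only: e)
  also have "\<dots> = (\<Prod>j\<in>J. expectation (\<lambda>\<omega>. exp ((l * c j) * Y j \<omega>)))"
    by (rule indep_vars_lebesgue_integral[OF fin ind2 ints])
  also have "\<dots> \<le> (\<Prod>j\<in>J. exp ((l * c j)\<^sup>2 * 1 / 2))"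
    by (intro prod_mono conjI integral_nonneg subg_le sg) auto
  also have "\<dots> = exp (l\<^sup>2 * (\<Sum>j\<in>J. (c j)\<^sup>2) / 2)"
    by (simp add: exp_sum[OF fin, symmetric] sum_distrib_left sum_divide_distrib power_mult_distrib)
  finally show "integrable M (\<lambda>\<omega>. exp (l * (\<Sum>j\<in>J. c j * Y j \<omega>))) \<and> expectation (\<lambda>\<omega>. exp (l * (\<Sum>j\<in>J. c j * Y j \<omega>))) \<le> exp (l\<^sup>2 * (\<Sum>j\<in>J. (c j)\<^sup>2) / 2)"
    using int by blast
qed

lemma second_moment_lincomb:
  fixes Y :: "'i \<Rightarrow> 'a \<Rightarrow> real"
  assumes fin: "finite J" and ind: "indep_vars (\<lambda>_. borel) Y J"
    and m: "\<And>j. j \<in> J \<Longrightarrow> integrable M (Y j) \<and> expectation (Y j) = 0 \<and>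
              integrable M (\<lambda>\<omega>. (Y j \<omega>)\<^sup>2) \<and> expectation (\<lambda>\<omega>. (Y j \<omega>)\<^sup>2) = 1"
  shows "integrable M (\<lambda>\<omega>. (\<Sum>j\<in>J. c j * Y j \<omega>)\<^sup>2)"
    and "expectation (\<lambda>\<omega>. (\<Sum>j\<in>J. c j * Y j \<omega>)\<^sup>2) = (\<Sum>j\<in>J. (c j)\<^sup>2)"
proof -
  have sq: "(\<Sum>j\<in>J. c j * Y j \<omega>)\<^sup>2 = (\<Sum>j\<in>J. \<Sum>k\<in>J. (c j * c k) * (Y j \<omega> * Y k \<omega>))" for \<omega>
    by (simp add: power2_eq_square sum_product mult_ac)
  have pr: "integrable M (\<lambda>\<omega>. Y j \<omega> * Y k \<omega>) \<and>
            expectation (\<lambda>\<omega>. Y j \<omega> * Y k \<omega>) = (if j = k then 1 else 0)" if jk: "j \<in> J" "k \<in> J" for j k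
  proof (cases "j = k")
    case True then show ?thesis using m[OF jk(1)] by (simp add: power2_eq_square)
  next
    case False
    have ind2: "indep_vars (\<lambda>_. borel) Y {j, k}" by (rule indep_vars_subset[OF ind]) (use jk in auto)
    have p: "(\<Prod>i\<in>{j,k}. Y i \<omega>) = Y j \<omega> * Y k \<omega>" for \<omega> using False by simp
    have i2: "\<And>i. i \<in> {j,k} \<Longrightarrow> integrable M (Y i)" using m jk by auto
    have "integrable M (\<lambda>\<omega>. \<Prod>i\<in>{j,k}. Y i \<omega>)" by (rule indep_vars_integrable[OF _ ind2 i2]) simp
    moreover have "expectation (\<lambda>\<omega>. \<Prod>i\<in>{j,k}. Y i \<omega>) = (\<Prod>i\<in>{j,k}. expectation (Y i))"
      by (rule indep_vars_lebesgue_integral[OF _ ind2 i2]) simp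
    ultimately show ?thesis using False m[OF jk(1)] m[OF jk(2)] by (simp add: p)
  qed
  show "integrable M (\<lambda>\<omega>. (\<Sum>j\<in>J. c j * Y j \<omega>)\<^sup>2)"
    unfolding sq using pr by (auto intro!: integrable_sum integrable_mult_right)
  have "expectation (\<lambda>\<omega>. (\<Sum>j\<in>J. c j * Y j \<omega>)\<^sup>2)
      = (\<Sum>j\<in>J. \<Sum>k\<in>J. (c j * c k) * expectation (\<lambda>\<omega>. Y j \<omega> * Y k \<omega>))"
    unfolding sq using pr by (simp add: integral_sum integrable_sum)
  also have "\<dots> = (\<Sum>j\<in>J. \<Sum>k\<in>J. if j = k then (c j)\<^sup>2 else 0)"
    using pr by (intro sum.cong refl) (simp add: power2_eq_square)
  also have "\<dots> = (\<Sum>j\<in>J. (c j)\<^sup>2)" using fin by (simp add: sum.delta)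
  finally show "expectation (\<lambda>\<omega>. (\<Sum>j\<in>J. c j * Y j \<omega>)\<^sup>2) = (\<Sum>j\<in>J. (c j)\<^sup>2)" .
qed

end

lemma opt_bound:
  fixes N u p :: real assumes N: "N > 0" and u: "u > 0"
  and H: "\<And>\<theta>. 0 < \<theta> \<Longrightarrow> \<theta> \<le> 1/5 \<Longrightarrow> p \<le> exp (35 * N * \<theta>\<^sup>2 - \<theta> * u)"
  shows "p < exp (- min (u\<^sup>2 / (160 * N)) (u / 10))"
proof (cases "u / (70 * N) \<le> 1/5")
  case True
  define \<theta> where "\<theta> = u / (70 * N)"
  have t0: "0 < \<theta>" using N u by (simp add: \<theta>_def)
  have "35 * N * \<theta>\<^sup>2 - \<theta> * u = - (u\<^sup>2 / (140 * N))"
    using N by (simp add: \<theta>_def power2_eq_square field_simps)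
  moreover have "- (u\<^sup>2 / (140 * N)) < - min (u\<^sup>2 / (160 * N)) (u / 10)"
  proof -
    have "u\<^sup>2 / (160 * N) < u\<^sup>2 / (140 * N)" using N u by (intro divide_strict_left_mono) auto
    then show ?thesis by linarith
  qed
  ultimately show ?thesis using H[OF t0 True[folded \<theta>_def]] by (smt (verit) exp_less_mono)
next
  case False
  then have big: "u > 14 * N" using N by (simp add: field_simps)
  have "35 * N * (1/5)\<^sup>2 - (1/5) * u < - (u / 10)" using big by (simp add: power2_eq_square)
  moreover have "- (u / 10) \<le> - min (u\<^sup>2 / (160 * N)) (u / 10)" by linarith
  moreover have "p \<le> exp (35 * N * (1/5)\<^sup>2 - (1/5) * u)" by (rule H) auto
  ultimately show ?thesis by (smt (verit) exp_less_mono)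
qed

lemma (in prob_space) markov_gen:
  assumes meas: "{\<omega>\<in>space M. P \<omega>} \<in> events"
    and g: "\<And>\<omega>. \<omega> \<in> space M \<Longrightarrow> P \<omega> \<Longrightarrow> 1 \<le> g \<omega>" and g0: "\<And>\<omega>. 0 \<le> g \<omega>"
    and gm: "g \<in> borel_measurable M"
    and bd: "(\<integral>\<^sup>+\<omega>. ennreal (g \<omega>) \<partial>M) \<le> ennreal B" and B: "0 \<le> B"
  shows "prob {\<omega>\<in>space M. P \<omega>} \<le> B"
proof -
  have "emeasure M {\<omega>\<in>space M. P \<omega>} = (\<integral>\<^sup>+\<omega>. indicator {\<omega>\<in>space M. P \<omega>} \<omega> \<partial>M)"
    using meas by simp
  also have "\<dots> \<le> (\<integral>\<^sup>+\<omega>. ennreal (g \<omega>) \<partial>M)"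
    by (intro nn_integral_mono) (auto simp: indicator_def g g0)
  also note bd
  finally show ?thesis using B by (simp add: emeasure_eq_measure)
qed

lemma (in prob_space) indep_nn_prod_real:
  fixes X :: "'i \<Rightarrow> 'a \<Rightarrow> real"
  assumes fin: "finite I" and ind: "indep_vars (\<lambda>_. borel) X I" and nn: "\<And>i \<omega>. 0 \<le> X i \<omega>"
  shows "(\<integral>\<^sup>+\<omega>. ennreal (\<Prod>i\<in>I. X i \<omega>) \<partial>M) = (\<Prod>i\<in>I. \<integral>\<^sup>+\<omega>. ennreal (X i \<omega>) \<partial>M)"
proof -
  have ind2: "indep_vars (\<lambda>_. borel) (\<lambda>i \<omega>. ennreal (X i \<omega>)) I"
    using indep_vars_compose2[OF ind, of "\<lambda>i y. ennreal y" "\<lambda>_. borel"] by simp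
  have "(\<integral>\<^sup>+\<omega>. ennreal (\<Prod>i\<in>I. X i \<omega>) \<partial>M) = (\<integral>\<^sup>+\<omega>. (\<Prod>i\<in>I. ennreal (X i \<omega>)) \<partial>M)"
    using nn by (simp add: prod_ennreal)
  also have "\<dots> = (\<Prod>i\<in>I. \<integral>\<^sup>+\<omega>. ennreal (X i \<omega>) \<partial>M)"
    by (rule indep_vars_nn_integral[OF fin ind2]) simp
  finally show ?thesis .
qed

lemma sq_aux1: "(s::real) > 0 \<Longrightarrow> q / (s * s) * t * s = q * t / s"
  by (simp add: field_simps)

lemma sq_aux2: "(s::real) > 0 \<Longrightarrow> m * t / s / 10 = t * (m / (s * s)) * s / 10"
  by (simp add: field_simps)

theorem theorem1:
  fixes M :: "'a measure" and m n :: nat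
    and x :: "nat \<Rightarrow> 'a \<Rightarrow> real" and S :: "nat \<Rightarrow> nat \<Rightarrow> 'a \<Rightarrow> real"
  assumes "prob_space M"
    and "m \<ge> 1" and "n \<ge> 1"
    and rv: "\<And>k. k \<in> entry_index m n \<Longrightarrow> entries x S k \<in> borel_measurable M"
    and indep: "prob_space.indep_vars M (\<lambda>_. borel) (entries x S) (entry_index m n)"
    and ident: "\<And>k k'. k \<in> entry_index m n \<Longrightarrow> k' \<in> entry_index m n \<Longrightarrow>
                   distr M borel (entries x S k) = distr M borel (entries x S k')"
    and mean: "\<And>k. k \<in> entry_index m n \<Longrightarrow>
                   integrable M (entries x S k) \<and> prob_space.expectation M (entries x S k) = 0"
    and var: "\<And>k. k \<in> entry_index m n \<Longrightarrow>
                   integrable M (\<lambda>\<omega>. (entries x S k \<omega>)\<^sup>2) \<and> prob_space.variance M (entries x S k) = 1"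
    and subg: "\<And>k. k \<in> entry_index m n \<Longrightarrow> subgaussian M 1 (entries x S k)"
    and "t > 0"
  shows "prob_space.prob M {\<omega> \<in> space M. 1 / sqrt (real n) * \<bar>sqnorm_X n x \<omega> - real n\<bar> > t}
           < 2 * exp (- min (t\<^sup>2 / 160) (t * sqrt (real n) / 10)) \<and>
         prob_space.prob M {\<omega> \<in> space M.
             1 / sqrt (real n) * \<bar>sqnorm_AX m n S x \<omega> - sqnorm_X n x \<omega>\<bar> > sqnorm_X n x \<omega> / real n * t}
           < 2 * exp (- min (t\<^sup>2 * (real m / real n) / 160) (t * (real m / real n) * sqrt (real n) / 10))"
proof -
  interpret prob_space M by (rule assms(1))
  have t0: "t > 0" by fact
  have n0: "real n > 0" using assms(3) by simp
  have m0: "real m > 0" using assms(2) by simp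
  have e_Inl: "entries x S (Inl j) = x j" for j by (simp add: entries_def)
  have e_Inr: "entries x S (Inr (i,j)) = S i j" for i j by (simp add: entries_def)
  have Inl_I: "j < n \<Longrightarrow> Inl j \<in> entry_index m n" for j by (simp add: entry_index_def)
  have Inr_I: "i < m \<Longrightarrow> j < n \<Longrightarrow> Inr (i,j) \<in> entry_index m n" for i j by (auto simp: entry_index_def)
  have rx[measurable]: "j < n \<Longrightarrow> x j \<in> borel_measurable M" for j using rv[OF Inl_I] by (simp add: e_Inl)
  have rS[measurable]: "i < m \<Longrightarrow> j < n \<Longrightarrow> S i j \<in> borel_measurable M" for i j
    using rv[OF Inr_I] by (simp add: e_Inr)
  have fk: "subgaussian M 1 (entries x S k) \<and> integrable M (entries x S k) \<and> expectation (entries x S k) = 0 \<and>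
      integrable M (\<lambda>\<omega>. (entries x S k \<omega>)\<^sup>2) \<and> expectation (\<lambda>\<omega>. (entries x S k \<omega>)\<^sup>2) = 1"
    if "k \<in> entry_index m n" for k
    using subg[OF that] mean[OF that] var[OF that] by simp
  have fx: "subgaussian M 1 (x j) \<and> integrable M (x j) \<and> expectation (x j) = 0 \<and>
      integrable M (\<lambda>\<omega>. (x j \<omega>)\<^sup>2) \<and> expectation (\<lambda>\<omega>. (x j \<omega>)\<^sup>2) = 1" if "j < n" for j
    using fk[OF Inl_I[OF that]] by (simp add: e_Inl)
  have fS: "subgaussian M 1 (S i j) \<and> integrable M (S i j) \<and> expectation (S i j) = 0 \<and>
      integrable M (\<lambda>\<omega>. (S i j \<omega>)\<^sup>2) \<and> expectation (\<lambda>\<omega>. (S i j \<omega>)\<^sup>2) = 1" if "i < m" "j < n" for i j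
    using fk[OF Inr_I[OF that]] by (simp add: e_Inr)
  have indX: "indep_vars (\<lambda>_. borel) x {..<n}"
  proof -
    have "indep_vars (\<lambda>_. borel) (entries x S) (Inl ` {..<n})"
      by (rule indep_vars_subset[OF indep]) (auto simp: entry_index_def)
    from indep_vars_reindex[OF this] have "indep_vars (\<lambda>_. borel) (\<lambda>j. entries x S (Inl j)) {..<n}"
      by (simp add: inj_on_def)
    then show ?thesis by (simp add: e_Inl)
  qed
  have indRow: "indep_vars (\<lambda>_. borel) (\<lambda>j. S i j) {..<n}" if "i < m" for i
  proof -
    have "indep_vars (\<lambda>_. borel) (entries x S) ((\<lambda>j. Inr (i, j)) ` {..<n})"
      by (rule indep_vars_subset[OF indep]) (use that in \<open>auto simp: entry_index_def\<close>)
    from indep_vars_reindex[OF this] have "indep_vars (\<lambda>_. borel) (\<lambda>j. entries x S (Inr (i, j))) {..<n}"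
      by (simp add: inj_on_def)
    then show ?thesis by (simp add: e_Inr)
  qed
  define Q where "Q \<omega> = sqnorm_X n x \<omega>" for \<omega>
  have Qm[measurable]: "Q \<in> borel_measurable M" unfolding Q_def sqnorm_X_def by measurable
  have mgf1: "(\<integral>\<^sup>+\<omega>. ennreal (exp (\<theta> * Q \<omega>)) \<partial>M) \<le> ennreal (exp (real n * (\<theta> + 35 * \<theta>\<^sup>2)))"
    if th: "\<bar>\<theta>\<bar> \<le> 1/5" for \<theta>
  proof -
    have ex: "exp (\<theta> * Q \<omega>) = (\<Prod>j<n. exp (\<theta> * (x j \<omega>)\<^sup>2))" for \<omega>
      by (simp add: Q_def sqnorm_X_def sum_distrib_left exp_sum)
    have ind: "indep_vars (\<lambda>_. borel) (\<lambda>j \<omega>. exp (\<theta> * (x j \<omega>)\<^sup>2)) {..<n}"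
      using indep_vars_compose2[OF indX, of "\<lambda>j y. exp (\<theta> * y\<^sup>2)" "\<lambda>_. borel"] by simp
    have "(\<integral>\<^sup>+\<omega>. ennreal (exp (\<theta> * Q \<omega>)) \<partial>M) = (\<integral>\<^sup>+\<omega>. ennreal (\<Prod>j<n. exp (\<theta> * (x j \<omega>)\<^sup>2)) \<partial>M)"
      by (simp only: ex)
    also have "\<dots> = (\<Prod>j<n. \<integral>\<^sup>+\<omega>. ennreal (exp (\<theta> * (x j \<omega>)\<^sup>2)) \<partial>M)"
      by (rule indep_nn_prod_real[OF _ ind]) auto
    also have "\<dots> \<le> (\<Prod>j<n. ennreal (exp (\<theta> + 35 * \<theta>\<^sup>2)))"
      by (intro prod_mono_ennreal subg_sq) (use fx th in auto)
    also have "\<dots> = ennreal (exp (real n * (\<theta> + 35 * \<theta>\<^sup>2)))"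
      by (simp add: prod_ennreal exp_of_nat_mult ennreal_power)
    finally show ?thesis .
  qed
  define u1 where "u1 = t * sqrt (real n)"
  have u1: "u1 > 0" using t0 n0 by (simp add: u1_def)
  have pA: "prob {\<omega>\<in>space M. Q \<omega> - real n > u1} < exp (- min (u1\<^sup>2 / (160 * real n)) (u1 / 10))"
  proof (rule opt_bound[OF n0 u1])
    fix \<theta> :: real assume th: "0 < \<theta>" "\<theta> \<le> 1/5"
    show "prob {\<omega>\<in>space M. Q \<omega> - real n > u1} \<le> exp (35 * real n * \<theta>\<^sup>2 - \<theta> * u1)"
    proof (rule markov_gen[where g = "\<lambda>\<omega>. exp (- \<theta> * (real n + u1)) * exp (\<theta> * Q \<omega>)"])
      show "{\<omega>\<in>space M. Q \<omega> - real n > u1} \<in> events" by measurable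
      fix \<omega> assume "Q \<omega> - real n > u1"
      then have "\<theta> * (real n + u1) \<le> \<theta> * Q \<omega>" using th by (intro mult_left_mono) auto
      then have "0 \<le> - \<theta> * (real n + u1) + \<theta> * Q \<omega>" by simp
      then show "1 \<le> exp (- \<theta> * (real n + u1)) * exp (\<theta> * Q \<omega>)" by (simp add: exp_add[symmetric])
    next
      have "(\<integral>\<^sup>+\<omega>. ennreal (exp (- \<theta> * (real n + u1)) * exp (\<theta> * Q \<omega>)) \<partial>M)
          = ennreal (exp (- \<theta> * (real n + u1))) * (\<integral>\<^sup>+\<omega>. ennreal (exp (\<theta> * Q \<omega>)) \<partial>M)"
        by (simp add: ennreal_mult nn_integral_cmult)
      also have "\<dots> \<le> ennreal (exp (- \<theta> * (real n + u1))) * ennreal (exp (real n * (\<theta> + 35 * \<theta>\<^sup>2)))"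
        using th by (intro mult_left_mono mgf1) auto
      also have "\<dots> = ennreal (exp (35 * real n * \<theta>\<^sup>2 - \<theta> * u1))"
        by (simp add: ennreal_mult[symmetric] exp_add[symmetric] algebra_simps)
      finally show "(\<integral>\<^sup>+\<omega>. ennreal (exp (- \<theta> * (real n + u1)) * exp (\<theta> * Q \<omega>)) \<partial>M) \<le> ennreal (exp (35 * real n * \<theta>\<^sup>2 - \<theta> * u1))" .
    qed auto
  qed
  have pB: "prob {\<omega>\<in>space M. real n - Q \<omega> > u1} < exp (- min (u1\<^sup>2 / (160 * real n)) (u1 / 10))"
  proof (rule opt_bound[OF n0 u1])
    fix \<theta> :: real assume th: "0 < \<theta>" "\<theta> \<le> 1/5"
    show "prob {\<omega>\<in>space M. real n - Q \<omega> > u1} \<le> exp (35 * real n * \<theta>\<^sup>2 - \<theta> * u1)"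
    proof (rule markov_gen[where g = "\<lambda>\<omega>. exp (\<theta> * (real n - u1)) * exp ((- \<theta>) * Q \<omega>)"])
      show "{\<omega>\<in>space M. real n - Q \<omega> > u1} \<in> events" by measurable
      fix \<omega> assume "real n - Q \<omega> > u1"
      then have "\<theta> * Q \<omega> \<le> \<theta> * (real n - u1)" using th by (intro mult_left_mono) auto
      then have "0 \<le> \<theta> * (real n - u1) + (- \<theta>) * Q \<omega>" by simp
      then show "1 \<le> exp (\<theta> * (real n - u1)) * exp ((- \<theta>) * Q \<omega>)" by (simp add: exp_add[symmetric])
    next
      have "(\<integral>\<^sup>+\<omega>. ennreal (exp (\<theta> * (real n - u1)) * exp ((- \<theta>) * Q \<omega>)) \<partial>M)
          = ennreal (exp (\<theta> * (real n - u1))) * (\<integral>\<^sup>+\<omega>. ennreal (exp ((- \<theta>) * Q \<omega>)) \<partial>M)"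
        by (simp add: ennreal_mult nn_integral_cmult)
      also have "\<dots> \<le> ennreal (exp (\<theta> * (real n - u1))) * ennreal (exp (real n * ((- \<theta>) + 35 * (- \<theta>)\<^sup>2)))"
        using th by (intro mult_left_mono mgf1) auto
      also have "\<dots> = ennreal (exp (35 * real n * \<theta>\<^sup>2 - \<theta> * u1))"
        by (simp add: ennreal_mult[symmetric] exp_add[symmetric] algebra_simps)
      finally show "(\<integral>\<^sup>+\<omega>. ennreal (exp (\<theta> * (real n - u1)) * exp ((- \<theta>) * Q \<omega>)) \<partial>M) \<le> ennreal (exp (35 * real n * \<theta>\<^sup>2 - \<theta> * u1))" .
    qed auto
  qed
  have part1: "prob {\<omega> \<in> space M. 1 / sqrt (real n) * \<bar>sqnorm_X n x \<omega> - real n\<bar> > t}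
           < 2 * exp (- min (t\<^sup>2 / 160) (t * sqrt (real n) / 10))"
  proof -
    have sub: "{\<omega> \<in> space M. 1 / sqrt (real n) * \<bar>sqnorm_X n x \<omega> - real n\<bar> > t}
      \<subseteq> {\<omega>\<in>space M. Q \<omega> - real n > u1} \<union> {\<omega>\<in>space M. real n - Q \<omega> > u1}"
    proof safe
      fix \<omega> assume "\<omega> \<in> space M" "1 / sqrt (real n) * \<bar>sqnorm_X n x \<omega> - real n\<bar> > t"
        "\<not> real n - Q \<omega> > u1"
      then have "\<bar>Q \<omega> - real n\<bar> > u1" using n0 by (simp add: Q_def u1_def field_simps)
      with \<open>\<not> real n - Q \<omega> > u1\<close> show "Q \<omega> - real n > u1" by linarith
    qed
    have "prob {\<omega> \<in> space M. 1 / sqrt (real n) * \<bar>sqnorm_X n x \<omega> - real n\<bar> > t}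
       \<le> prob ({\<omega>\<in>space M. Q \<omega> - real n > u1} \<union> {\<omega>\<in>space M. real n - Q \<omega> > u1})"
      by (rule finite_measure_mono[OF sub]) measurable
    also have "\<dots> \<le> prob {\<omega>\<in>space M. Q \<omega> - real n > u1} + prob {\<omega>\<in>space M. real n - Q \<omega> > u1}"
      by (rule measure_Un_le) measurable
    also have "\<dots> < 2 * exp (- min (u1\<^sup>2 / (160 * real n)) (u1 / 10))" using pA pB by linarith
    also have "u1\<^sup>2 / (160 * real n) = t\<^sup>2 / 160" using n0 by (simp add: u1_def power_mult_distrib)
    also have "u1 / 10 = t * sqrt (real n) / 10" by (simp add: u1_def)
    finally show ?thesis .
  qed
  have part2: "prob {\<omega> \<in> space M.
             1 / sqrt (real n) * \<bar>sqnorm_AX m n S x \<omega> - sqnorm_X n x \<omega>\<bar> > sqnorm_X n x \<omega> / real n * t}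
           < 2 * exp (- min (t\<^sup>2 * (real m / real n) / 160) (t * (real m / real n) * sqrt (real n) / 10))"
  proof -
  define L where "L = (Inl ` {..<n} :: (nat + nat \<times> nat) set)"
  define R where "R = (Inr ` ({..<m} \<times> {..<n}) :: (nat + nat \<times> nat) set)"
  define PL where "PL = PiM L (\<lambda>_. borel :: real measure)"
  define PR where "PR = PiM R (\<lambda>_. borel :: real measure)"
  define Xv where "Xv \<omega> = restrict (\<lambda>k. entries x S k \<omega>) L" for \<omega>
  define Sv where "Sv \<omega> = restrict (\<lambda>k. entries x S k \<omega>) R" for \<omega>
  define qf where "qf a = (\<Sum>j<n. (a (Inl j))\<^sup>2)" for a :: "nat + nat \<times> nat \<Rightarrow> real"
  define Tf where "Tf a s = (\<Sum>i<m. (\<Sum>j<n. s (Inr (i,j)) * a (Inl j))\<^sup>2)" for a s :: "nat + nat \<times> nat \<Rightarrow> real"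
  define Gf where "Gf \<theta> p = (if qf (fst p) > 0 then exp (\<theta> * Tf (fst p) (snd p) / qf (fst p)) else 0)" for \<theta> p
  define T where "T \<omega> = (\<Sum>i<m. (\<Sum>j<n. S i j \<omega> * x j \<omega>)\<^sup>2)" for \<omega>
  have Gf_eval: "Gf \<theta> (Xv \<omega>, Sv \<omega>) = (if Q \<omega> > 0 then exp (\<theta> * T \<omega> / Q \<omega>) else 0)" for \<theta> \<omega>
  proof -
    have "qf (Xv \<omega>) = Q \<omega>" unfolding qf_def Q_def sqnorm_X_def Xv_def L_def
      by (intro sum.cong) (auto simp: e_Inl)
    moreover have "Tf (Xv \<omega>) (Sv \<omega>) = T \<omega>" unfolding Tf_def T_def Xv_def Sv_def L_def R_def
      by (intro sum.cong refl arg_cong[where f="\<lambda>z. z\<^sup>2"]) (auto simp: e_Inl e_Inr)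
    ultimately show ?thesis by (simp add: Gf_def)
  qed
  have Gf0: "0 \<le> Gf \<theta> p" for \<theta> p by (simp add: Gf_def)
  have compL[measurable]: "(\<lambda>p. fst p (Inl j)) \<in> borel_measurable (PL \<Otimes>\<^sub>M PR)" if "j < n" for j
    unfolding PL_def by (rule measurable_compose[OF measurable_fst measurable_component_singleton]) (use that in \<open>simp add: L_def\<close>)
  have compR[measurable]: "(\<lambda>p. snd p (Inr (i,j))) \<in> borel_measurable (PL \<Otimes>\<^sub>M PR)" if "i < m" "j < n" for i j
    unfolding PR_def by (rule measurable_compose[OF measurable_snd measurable_component_singleton]) (use that in \<open>simp add: R_def\<close>)
  have Gfm: "(\<lambda>p. Gf \<theta> p) \<in> borel_measurable (PL \<Otimes>\<^sub>M PR)" for \<theta>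
    unfolding Gf_def qf_def Tf_def by measurable
  have inner: "(\<integral>\<^sup>+\<omega>. ennreal (Gf \<theta> (a, Sv \<omega>)) \<partial>M) \<le> ennreal (exp (real m * (\<theta> + 35 * \<theta>\<^sup>2)))"
    if th: "\<bar>\<theta>\<bar> \<le> 1/5" for \<theta> a
  proof (cases "qf a > 0")
    case False
    then show ?thesis by (simp add: Gf_def)
  next
    case True
    define c where "c j = a (Inl j) / sqrt (qf a)" for j
    define W where "W i \<omega> = (\<Sum>j<n. c j * S i j \<omega>)" for i \<omega>
    have Wfun: "W i = (\<lambda>\<omega>. \<Sum>j<n. c j * S i j \<omega>)" for i by (simp add: W_def fun_eq_iff)
    have c2: "(\<Sum>j<n. (c j)\<^sup>2) = 1"
    proof -
      have "(\<Sum>j<n. (c j)\<^sup>2) = (\<Sum>j<n. (a (Inl j))\<^sup>2) / qf a"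
        using True by (simp add: c_def power_divide sum_divide_distrib)
      then show ?thesis using True by (simp add: qf_def)
    qed
    have Wsq: "(W i \<omega>)\<^sup>2 = (\<Sum>j<n. Sv \<omega> (Inr (i,j)) * a (Inl j))\<^sup>2 / qf a" if "i < m" for i \<omega>
    proof -
      have "W i \<omega> = (\<Sum>j<n. Sv \<omega> (Inr (i,j)) * a (Inl j)) / sqrt (qf a)"
        unfolding W_def c_def sum_divide_distrib Sv_def R_def
        by (intro sum.cong refl) (use that in \<open>auto simp: e_Inr\<close>)
      then show ?thesis using True by (simp add: power_divide)
    qed
    have Geq: "Gf \<theta> (a, Sv \<omega>) = (\<Prod>i<m. exp (\<theta> * (W i \<omega>)\<^sup>2))" for \<omega>
    proof -
      have "\<theta> * Tf a (Sv \<omega>) / qf a = (\<Sum>i<m. \<theta> * (W i \<omega>)\<^sup>2)"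
        unfolding Tf_def sum_distrib_left sum_divide_distrib
        by (intro sum.cong refl) (simp add: Wsq)
      then show ?thesis using True by (simp add: Gf_def exp_sum)
    qed
    have Wm: "W i \<in> borel_measurable M" if "i < m" for i
      unfolding W_def using that by measurable
    have Wsg: "subgaussian M 1 (W i)" if "i < m" for i
      using subg_lincomb[OF _ indRow[OF that], of c] fS[OF that] c2 by (simp add: Wfun)
    have W2: "integrable M (\<lambda>\<omega>. (W i \<omega>)\<^sup>2) \<and> expectation (\<lambda>\<omega>. (W i \<omega>)\<^sup>2) = 1" if "i < m" for i
      using second_moment_lincomb[OF _ indRow[OF that], of c] fS[OF that] c2 by (simp add: Wfun)
    define K where "K i = ((\<lambda>j. Inr (i, j)) ` {..<n} :: (nat + nat \<times> nat) set)" for i :: nat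
    have indK: "indep_vars (\<lambda>i. PiM (K i) (\<lambda>_. borel)) (\<lambda>i \<omega>. restrict (\<lambda>k. entries x S k \<omega>) (K i)) {..<m}"
      by (rule indep_vars_restrict[OF indep]) (auto simp: K_def entry_index_def disjoint_family_on_def)
    define Y where "Y i r = exp (\<theta> * (\<Sum>j<n. c j * r (Inr (i, j)))\<^sup>2)" for i and r :: "nat + nat \<times> nat \<Rightarrow> real"
    have Ym: "Y i \<in> borel_measurable (PiM (K i) (\<lambda>_. borel))" if "i < m" for i
    proof -
      have [measurable]: "(\<lambda>r. r (Inr (i, j))) \<in> borel_measurable (PiM (K i) (\<lambda>_. borel))" if "j < n" for j
        by (rule measurable_component_singleton) (use that in \<open>simp add: K_def\<close>)
      show ?thesis unfolding Y_def by measurable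
    qed
    have indW: "indep_vars (\<lambda>_. borel) (\<lambda>i \<omega>. exp (\<theta> * (W i \<omega>)\<^sup>2)) {..<m}"
    proof -
      have "indep_vars (\<lambda>_. borel) (\<lambda>i \<omega>. Y i (restrict (\<lambda>k. entries x S k \<omega>) (K i))) {..<m}"
        by (rule indep_vars_compose2[OF indK]) (simp add: Ym)
      moreover have "Y i (restrict (\<lambda>k. entries x S k \<omega>) (K i)) = exp (\<theta> * (W i \<omega>)\<^sup>2)" for i \<omega>
        unfolding Y_def W_def K_def
        by (intro arg_cong[where f="\<lambda>z. exp (\<theta> * z\<^sup>2)"] sum.cong refl) (auto simp: e_Inr)
      ultimately show ?thesis by simp
    qed
    have "(\<integral>\<^sup>+\<omega>. ennreal (Gf \<theta> (a, Sv \<omega>)) \<partial>M) = (\<integral>\<^sup>+\<omega>. ennreal (\<Prod>i<m. exp (\<theta> * (W i \<omega>)\<^sup>2)) \<partial>M)"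
      by (simp only: Geq)
    also have "\<dots> = (\<Prod>i<m. \<integral>\<^sup>+\<omega>. ennreal (exp (\<theta> * (W i \<omega>)\<^sup>2)) \<partial>M)"
      by (rule indep_nn_prod_real[OF _ indW]) auto
    also have "\<dots> \<le> (\<Prod>i<m. ennreal (exp (\<theta> + 35 * \<theta>\<^sup>2)))"
      by (intro prod_mono_ennreal subg_sq) (use Wm Wsg W2 th in auto)
    also have "\<dots> = ennreal (exp (real m * (\<theta> + 35 * \<theta>\<^sup>2)))"
      by (simp add: prod_ennreal exp_of_nat_mult ennreal_power)
    finally show ?thesis .
  qed
  have Xvm: "Xv \<in> measurable M PL" unfolding Xv_def PL_def
    by (rule measurable_restrict) (use rv in \<open>auto simp: L_def entry_index_def\<close>)
  have Svm: "Sv \<in> measurable M PR" unfolding Sv_def PR_def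
    by (rule measurable_restrict) (use rv in \<open>auto simp: R_def entry_index_def\<close>)
  have indXS: "indep_var PL Xv PR Sv"
    unfolding PL_def PR_def Xv_def Sv_def
    by (rule indep_var_restrict[OF indep]) (auto simp: L_def R_def entry_index_def)
  have jointeq: "distr M PL Xv \<Otimes>\<^sub>M distr M PR Sv = distr M (PL \<Otimes>\<^sub>M PR) (\<lambda>\<omega>. (Xv \<omega>, Sv \<omega>))"
    using indXS indep_var_distribution_eq by blast
  interpret PXd: prob_space "distr M PL Xv" by (rule prob_space_distr[OF Xvm])
  interpret PSd: prob_space "distr M PR Sv" by (rule prob_space_distr[OF Svm])
  have mgf2: "(\<integral>\<^sup>+\<omega>. ennreal (Gf \<theta> (Xv \<omega>, Sv \<omega>)) \<partial>M) \<le> ennreal (exp (real m * (\<theta> + 35 * \<theta>\<^sup>2)))"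
    if th: "\<bar>\<theta>\<bar> \<le> 1/5" for \<theta>
  proof -
    have Gm': "(\<lambda>p. ennreal (Gf \<theta> p)) \<in> borel_measurable (distr M PL Xv \<Otimes>\<^sub>M distr M PR Sv)"
      using Gfm[of \<theta>] by (simp cong: measurable_cong_sets[OF sets_pair_measure_cong[OF sets_distr sets_distr] refl])
    have "(\<integral>\<^sup>+\<omega>. ennreal (Gf \<theta> (Xv \<omega>, Sv \<omega>)) \<partial>M)
        = (\<integral>\<^sup>+p. ennreal (Gf \<theta> p) \<partial>distr M (PL \<Otimes>\<^sub>M PR) (\<lambda>\<omega>. (Xv \<omega>, Sv \<omega>)))"
      by (subst nn_integral_distr) (use Xvm Svm Gfm in auto)
    also have "\<dots> = (\<integral>\<^sup>+p. ennreal (Gf \<theta> p) \<partial>(distr M PL Xv \<Otimes>\<^sub>M distr M PR Sv))"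
      by (simp only: jointeq)
    also have "\<dots> = (\<integral>\<^sup>+a. \<integral>\<^sup>+s. ennreal (Gf \<theta> (a, s)) \<partial>distr M PR Sv \<partial>distr M PL Xv)"
      by (rule PSd.nn_integral_fst[symmetric, OF Gm'])
    also have "\<dots> \<le> (\<integral>\<^sup>+a. ennreal (exp (real m * (\<theta> + 35 * \<theta>\<^sup>2))) \<partial>distr M PL Xv)"
    proof (rule nn_integral_mono)
      fix a assume a: "a \<in> space (distr M PL Xv)"
      have "(\<lambda>s. ennreal (Gf \<theta> (a, s))) \<in> borel_measurable PR"
        using Gfm[of \<theta>] a by (simp add: measurable_Pair2)
      then have "(\<integral>\<^sup>+s. ennreal (Gf \<theta> (a, s)) \<partial>distr M PR Sv) = (\<integral>\<^sup>+\<omega>. ennreal (Gf \<theta> (a, Sv \<omega>)) \<partial>M)"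
        by (subst nn_integral_distr) (use Svm in auto)
      also have "\<dots> \<le> ennreal (exp (real m * (\<theta> + 35 * \<theta>\<^sup>2)))" by (rule inner[OF th])
      finally show "(\<integral>\<^sup>+s. ennreal (Gf \<theta> (a, s)) \<partial>distr M PR Sv) \<le> ennreal (exp (real m * (\<theta> + 35 * \<theta>\<^sup>2)))" .
    qed
    also have "\<dots> = ennreal (exp (real m * (\<theta> + 35 * \<theta>\<^sup>2)))"
    proof -
      have "emeasure (distr M PL Xv) (space PL) = 1" using PXd.emeasure_space_1 by simp
      then show ?thesis by simp
    qed
    finally show ?thesis .
  qed
  have Tm[measurable]: "T \<in> borel_measurable M" unfolding T_def by measurable
  have Gm: "(\<lambda>\<omega>. Gf \<theta> (Xv \<omega>, Sv \<omega>)) \<in> borel_measurable M" for \<theta>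
    by (rule measurable_compose[OF measurable_Pair[OF Xvm Svm] Gfm])
  define u2 where "u2 = real m * t / sqrt (real n)"
  have u2: "u2 > 0" using t0 n0 m0 by (simp add: u2_def)
  have pA2: "prob {\<omega>\<in>space M. Q \<omega> > 0 \<and> T \<omega> / Q \<omega> - real m > u2} < exp (- min (u2\<^sup>2 / (160 * real m)) (u2 / 10))"
  proof (rule opt_bound[OF m0 u2])
    fix \<theta> :: real assume th: "0 < \<theta>" "\<theta> \<le> 1/5"
    show "prob {\<omega>\<in>space M. Q \<omega> > 0 \<and> T \<omega> / Q \<omega> - real m > u2} \<le> exp (35 * real m * \<theta>\<^sup>2 - \<theta> * u2)"
    proof (rule markov_gen[where g = "\<lambda>\<omega>. exp (- \<theta> * (real m + u2)) * Gf \<theta> (Xv \<omega>, Sv \<omega>)"])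
      show "{\<omega>\<in>space M. Q \<omega> > 0 \<and> T \<omega> / Q \<omega> - real m > u2} \<in> events" by measurable
      show "(\<lambda>\<omega>. exp (- \<theta> * (real m + u2)) * Gf \<theta> (Xv \<omega>, Sv \<omega>)) \<in> borel_measurable M"
        using Gm[of \<theta>] by measurable
      fix \<omega> assume "Q \<omega> > 0 \<and> T \<omega> / Q \<omega> - real m > u2"
      then have q: "Q \<omega> > 0" and "T \<omega> / Q \<omega> - real m > u2" by auto
      then have "\<theta> * (real m + u2) \<le> \<theta> * (T \<omega> / Q \<omega>)" using th by (intro mult_left_mono) auto
      then have "0 \<le> - \<theta> * (real m + u2) + \<theta> * T \<omega> / Q \<omega>" by simp
      then show "1 \<le> exp (- \<theta> * (real m + u2)) * Gf \<theta> (Xv \<omega>, Sv \<omega>)"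
        using q by (simp add: Gf_eval exp_add[symmetric])
    next
      have "(\<integral>\<^sup>+\<omega>. ennreal (exp (- \<theta> * (real m + u2)) * Gf \<theta> (Xv \<omega>, Sv \<omega>)) \<partial>M)
          = ennreal (exp (- \<theta> * (real m + u2))) * (\<integral>\<^sup>+\<omega>. ennreal (Gf \<theta> (Xv \<omega>, Sv \<omega>)) \<partial>M)"
        using Gm[of \<theta>] by (simp add: ennreal_mult Gf0 nn_integral_cmult)
      also have "\<dots> \<le> ennreal (exp (- \<theta> * (real m + u2))) * ennreal (exp (real m * (\<theta> + 35 * \<theta>\<^sup>2)))"
        using th by (intro mult_left_mono mgf2) auto
      also have "\<dots> = ennreal (exp (35 * real m * \<theta>\<^sup>2 - \<theta> * u2))"
        by (simp add: ennreal_mult[symmetric] exp_add[symmetric] algebra_simps)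
      finally show "(\<integral>\<^sup>+\<omega>. ennreal (exp (- \<theta> * (real m + u2)) * Gf \<theta> (Xv \<omega>, Sv \<omega>)) \<partial>M) \<le> ennreal (exp (35 * real m * \<theta>\<^sup>2 - \<theta> * u2))" .
    qed (auto simp: Gf0)
  qed
  have pB2: "prob {\<omega>\<in>space M. Q \<omega> > 0 \<and> real m - T \<omega> / Q \<omega> > u2} < exp (- min (u2\<^sup>2 / (160 * real m)) (u2 / 10))"
  proof (rule opt_bound[OF m0 u2])
    fix \<theta> :: real assume th: "0 < \<theta>" "\<theta> \<le> 1/5"
    show "prob {\<omega>\<in>space M. Q \<omega> > 0 \<and> real m - T \<omega> / Q \<omega> > u2} \<le> exp (35 * real m * \<theta>\<^sup>2 - \<theta> * u2)"
    proof (rule markov_gen[where g = "\<lambda>\<omega>. exp (\<theta> * (real m - u2)) * Gf (- \<theta>) (Xv \<omega>, Sv \<omega>)"])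
      show "{\<omega>\<in>space M. Q \<omega> > 0 \<and> real m - T \<omega> / Q \<omega> > u2} \<in> events" by measurable
      show "(\<lambda>\<omega>. exp (\<theta> * (real m - u2)) * Gf (- \<theta>) (Xv \<omega>, Sv \<omega>)) \<in> borel_measurable M"
        using Gm[of "- \<theta>"] by measurable
      fix \<omega> assume "Q \<omega> > 0 \<and> real m - T \<omega> / Q \<omega> > u2"
      then have q: "Q \<omega> > 0" and "real m - T \<omega> / Q \<omega> > u2" by auto
      then have "\<theta> * (T \<omega> / Q \<omega>) \<le> \<theta> * (real m - u2)" using th by (intro mult_left_mono) auto
      then have "0 \<le> \<theta> * (real m - u2) + (- \<theta>) * T \<omega> / Q \<omega>" by simp
      then show "1 \<le> exp (\<theta> * (real m - u2)) * Gf (- \<theta>) (Xv \<omega>, Sv \<omega>)"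
        using q by (simp add: Gf_eval exp_add[symmetric])
    next
      have "(\<integral>\<^sup>+\<omega>. ennreal (exp (\<theta> * (real m - u2)) * Gf (- \<theta>) (Xv \<omega>, Sv \<omega>)) \<partial>M)
          = ennreal (exp (\<theta> * (real m - u2))) * (\<integral>\<^sup>+\<omega>. ennreal (Gf (- \<theta>) (Xv \<omega>, Sv \<omega>)) \<partial>M)"
        using Gm[of "- \<theta>"] by (simp add: ennreal_mult Gf0 nn_integral_cmult)
      also have "\<dots> \<le> ennreal (exp (\<theta> * (real m - u2))) * ennreal (exp (real m * ((- \<theta>) + 35 * (- \<theta>)\<^sup>2)))"
        using th by (intro mult_left_mono mgf2) auto
      also have "\<dots> = ennreal (exp (35 * real m * \<theta>\<^sup>2 - \<theta> * u2))"
        by (simp add: ennreal_mult[symmetric] exp_add[symmetric] algebra_simps)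
      finally show "(\<integral>\<^sup>+\<omega>. ennreal (exp (\<theta> * (real m - u2)) * Gf (- \<theta>) (Xv \<omega>, Sv \<omega>)) \<partial>M) \<le> ennreal (exp (35 * real m * \<theta>\<^sup>2 - \<theta> * u2))" .
    qed (auto simp: Gf0)
  qed
  have sn: "sqrt (real n) * sqrt (real n) = real n" using n0 by simp
  have snp: "sqrt (real n) > 0" using n0 by simp
  have sub: "{\<omega> \<in> space M. 1 / sqrt (real n) * \<bar>sqnorm_AX m n S x \<omega> - sqnorm_X n x \<omega>\<bar> > sqnorm_X n x \<omega> / real n * t}
      \<subseteq> {\<omega>\<in>space M. Q \<omega> > 0 \<and> T \<omega> / Q \<omega> - real m > u2} \<union> {\<omega>\<in>space M. Q \<omega> > 0 \<and> real m - T \<omega> / Q \<omega> > u2}"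
  proof (rule subsetI)
    fix \<omega> assume "\<omega> \<in> {\<omega> \<in> space M. 1 / sqrt (real n) * \<bar>sqnorm_AX m n S x \<omega> - sqnorm_X n x \<omega>\<bar> > sqnorm_X n x \<omega> / real n * t}"
    then have \<omega>: "\<omega> \<in> space M"
      and cond: "1 / sqrt (real n) * \<bar>sqnorm_AX m n S x \<omega> - sqnorm_X n x \<omega>\<bar> > sqnorm_X n x \<omega> / real n * t"
      by auto
    have AX: "sqnorm_AX m n S x \<omega> = T \<omega> / real m"
    proof -
      have "sqnorm_AX m n S x \<omega> = (\<Sum>i<m. (1 / sqrt (real m) * (\<Sum>j<n. S i j \<omega> * x j \<omega>))\<^sup>2)"
        unfolding sqnorm_AX_def by (simp add: sum_distrib_left mult.assoc)
      also have "\<dots> = (\<Sum>i<m. (\<Sum>j<n. S i j \<omega> * x j \<omega>)\<^sup>2 / real m)"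
        using m0 by (simp add: power_mult_distrib power_divide)
      also have "\<dots> = T \<omega> / real m" by (simp add: T_def sum_divide_distrib)
      finally show ?thesis .
    qed
    have Qnn: "Q \<omega> \<ge> 0" by (simp add: Q_def sqnorm_X_def sum_nonneg)
    have qpos: "Q \<omega> > 0"
    proof (rule ccontr)
      assume "\<not> Q \<omega> > 0"
      then have "Q \<omega> = 0" using Qnn by simp
      then have "\<forall>j\<in>{..<n}. (x j \<omega>)\<^sup>2 = 0" unfolding Q_def sqnorm_X_def
        by (subst sum_nonneg_eq_0_iff[symmetric]) auto
      then have "T \<omega> = 0" by (simp add: T_def)
      then show False using cond \<open>Q \<omega> = 0\<close> AX by (simp add: Q_def)
    qed
    define D where "D = \<bar>T \<omega> / real m - Q \<omega>\<bar>"
    have "D * (1 / sqrt (real n)) * sqrt (real n) > Q \<omega> / real n * t * sqrt (real n)"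
      using cond snp by (intro mult_strict_right_mono) (auto simp: D_def AX Q_def mult.commute)
    moreover have "Q \<omega> / real n * t * sqrt (real n) = Q \<omega> * t / sqrt (real n)"
      using sq_aux1[OF snp, of "Q \<omega>" t] by (simp only: sn)
    ultimately have D1: "D > Q \<omega> * t / sqrt (real n)" using snp by simp
    have "\<bar>T \<omega> / Q \<omega> - real m\<bar> = real m / Q \<omega> * D"
    proof -
      have "T \<omega> / Q \<omega> - real m = real m / Q \<omega> * (T \<omega> / real m - Q \<omega>)"
        using m0 qpos by (simp add: field_simps)
      then show ?thesis using m0 qpos by (simp add: D_def abs_mult)
    qed
    also have "real m / Q \<omega> * D > real m / Q \<omega> * (Q \<omega> * t / sqrt (real n))"
      using D1 m0 qpos by (intro mult_strict_left_mono) auto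
    also have "real m / Q \<omega> * (Q \<omega> * t / sqrt (real n)) = u2"
      using qpos by (simp add: u2_def)
    finally have "\<bar>T \<omega> / Q \<omega> - real m\<bar> > u2" .
    then show "\<omega> \<in> {\<omega>\<in>space M. Q \<omega> > 0 \<and> T \<omega> / Q \<omega> - real m > u2} \<union> {\<omega>\<in>space M. Q \<omega> > 0 \<and> real m - T \<omega> / Q \<omega> > u2}"
      using \<omega> qpos by (cases "T \<omega> / Q \<omega> - real m > u2") auto
  qed
  have "prob {\<omega> \<in> space M. 1 / sqrt (real n) * \<bar>sqnorm_AX m n S x \<omega> - sqnorm_X n x \<omega>\<bar> > sqnorm_X n x \<omega> / real n * t}
     \<le> prob ({\<omega>\<in>space M. Q \<omega> > 0 \<and> T \<omega> / Q \<omega> - real m > u2} \<union> {\<omega>\<in>space M. Q \<omega> > 0 \<and> real m - T \<omega> / Q \<omega> > u2})"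
    by (rule finite_measure_mono[OF sub]) measurable
  also have "\<dots> \<le> prob {\<omega>\<in>space M. Q \<omega> > 0 \<and> T \<omega> / Q \<omega> - real m > u2} + prob {\<omega>\<in>space M. Q \<omega> > 0 \<and> real m - T \<omega> / Q \<omega> > u2}"
    by (rule measure_Un_le) measurable
  also have "\<dots> < 2 * exp (- min (u2\<^sup>2 / (160 * real m)) (u2 / 10))" using pA2 pB2 by linarith
  also have "u2\<^sup>2 / (160 * real m) = t\<^sup>2 * (real m / real n) / 160"
    using m0 n0 by (simp add: u2_def power_mult_distrib power_divide power2_eq_square)
  also have "u2 / 10 = t * (real m / real n) * sqrt (real n) / 10"
    using sq_aux2[OF snp, of "real m" t] unfolding u2_def by (simp only: sn)
  finally show ?thesis .
  qed
  show ?thesis using part1 part2 by blast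
qed

end
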